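(* (Darboux transformation of eigenfunctions.) Let $(\Omega(\mathcal{A}),\mathrm{d},\bar{\mathrm{d}})$ be a bidifferential graded algebra and $\phi\in\mathcal{A}$. Let $\Delta,\Delta'\in\mathcal{A}$ satisfy $\bar{\mathrm{d}}\Delta=(\mathrm{d}\Delta)\Delta$ and $\bar{\mathrm{d}}\Delta'=(\mathrm{d}\Delta')\Delta'$. Let $\psi\in\mathcal{A}$ satisfy $\bar{\mathrm{d}}\psi=(\mathrm{d}\phi)\psi+(\mathrm{d}\psi)\Delta$, let $\theta\in\mathcal{A}$ be invertible with $\bar{\mathrm{d}}\theta=(\mathrm{d}\phi)\theta+(\mathrm{d}\theta)\Delta'$, let $C'\in\mathcal{A}$ with $\mathrm{d}C'=0$, and let $\mathcal{M}\in\mathcal{A}$ satisfy $\bar{\mathrm{d}}\mathcal{M}=(\mathrm{d}\mathcal{M})\Delta$ and $\Delta\mathcal{M}=\mathcal{M}\Delta$. Set $$\phi':=\phi+\theta\Delta'\theta^{-1}-C',\qquad \psi':=(\psi\Delta-\theta\Delta'\theta^{-1}\psi)\,\mathcal{M}.$$ Then $\bar{\mathrm{d}}\psi'=(\mathrm{d}\phi')\,\psi'+(\mathrm{d}\psi')\,\Delta$.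
   Context: $\mathcal{A}$ is a unital associative algebra over $\mathbb{C}$ with identity $I$. A bidifferential graded algebra $(\Omega(\mathcal{A}),\mathrm{d},\bar{\mathrm{d}})$ consists of a graded associative algebra $\Omega(\mathcal{A})=\bigoplus_{r\ge 0}\Omega^r(\mathcal{A})$ with $\Omega^0(\mathcal{A})=\mathcal{A}$ (each $\Omega^r(\mathcal{A})$ an $\mathcal{A}$-bimodule) together with two linear maps $\mathrm{d},\bar{\mathrm{d}}:\Omega^r(\mathcal{A})\to\Omega^{r+1}(\mathcal{A})$ satisfying the graded Leibniz rule $\mathrm{d}(\alpha\beta)=(\mathrm{d}\alpha)\beta+(-1)^r\alpha\,\mathrm{d}\beta$ for $\alpha\in\Omega^r(\mathcal{A})$ (and likewise for $\bar{\mathrm{d}}$), and $\mathrm{d}^2=\bar{\mathrm{d}}^2=0$, $\mathrm{d}\bar{\mathrm{d}}+\bar{\mathrm{d}}\mathrm{d}=0$. *)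

theory Defs
  imports Complex_Main
begin

text \<open>A graded associative unital complex algebra Omega = direct sum of Om r (r \<ge> 0),
  modelled as a ring type 'w together with the homogeneous components Om r,
  and the complex scalars acting through a central unital ring homomorphism
  sc :: complex \<Rightarrow> 'w (scalar multiplication c . x = sc c * x).
  The algebra A is Om 0.\<close>

definition graded_algebra ::
  "(complex \<Rightarrow> 'w::ring_1) \<Rightarrow> (nat \<Rightarrow> 'w set) \<Rightarrow> bool" where
  "graded_algebra sc Om \<longleftrightarrow>
     sc 1 = 1 \<and> (\<forall>a b. sc (a + b) = sc a + sc b) \<and> (\<forall>a b. sc (a * b) = sc a * sc b)
   \<and> (\<forall>c x. sc c * x = x * sc c)
   \<and> (\<forall>c. sc c \<in> Om 0)
   \<and> (\<forall>r. 0 \<in> Om r \<and> (\<forall>x\<in>Om r. \<forall>y\<in>Om r. x + y \<in> Om r)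
          \<and> (\<forall>c. \<forall>x\<in>Om r. sc c * x \<in> Om r))
   \<and> (\<forall>r s. \<forall>x\<in>Om r. \<forall>y\<in>Om s. x * y \<in> Om (r + s))
   \<and> (\<forall>w. \<exists>n x. (\<forall>i<n. x i \<in> Om i) \<and> w = (\<Sum>i<n. x i))
   \<and> (\<forall>n x. (\<forall>i<n. x i \<in> Om i) \<and> (\<Sum>i<n. x i) = 0 \<longrightarrow> (\<forall>i<n. x i = 0))"

definition graded_derivation ::
  "(complex \<Rightarrow> 'w::ring_1) \<Rightarrow> (nat \<Rightarrow> 'w set) \<Rightarrow> ('w \<Rightarrow> 'w) \<Rightarrow> bool" where
  "graded_derivation sc Om d \<longleftrightarrow>
     (\<forall>x y. d (x + y) = d x + d y) \<and> (\<forall>c x. d (sc c * x) = sc c * d x)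
   \<and> (\<forall>r. \<forall>x\<in>Om r. d x \<in> Om (Suc r))
   \<and> (\<forall>r. \<forall>a\<in>Om r. \<forall>b. d (a * b) = d a * b + (-1) ^ r * a * d b)"

definition bidifferential_graded_algebra ::
  "(complex \<Rightarrow> 'w::ring_1) \<Rightarrow> (nat \<Rightarrow> 'w set) \<Rightarrow> ('w \<Rightarrow> 'w) \<Rightarrow> ('w \<Rightarrow> 'w) \<Rightarrow> bool" where
  "bidifferential_graded_algebra sc Om d db \<longleftrightarrow>
     graded_algebra sc Om \<and> graded_derivation sc Om d \<and> graded_derivation sc Om db
   \<and> (\<forall>x. d (d x) = 0) \<and> (\<forall>x. db (db x) = 0) \<and> (\<forall>x. d (db x) + db (d x) = 0)"

end

theory Submission
  imports Defs
begin

lemma chi_alg: "(dP::'a::ring_1) * \<psi> * \<Delta> + dpsi*\<Delta>*\<Delta> + \<psi> * (dD * \<Delta>) - ((dP * T + dT*T - T*dP) * \<psi> + T * (dP*\<psi> + dpsi*\<Delta>))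
   = (dP + dT) * (\<psi> * \<Delta> - T * \<psi>) + (dpsi * \<Delta> + \<psi> * dD - (dT * \<psi> + T * dpsi)) * \<Delta>"
  by (simp add: algebra_simps)

theorem mainTheorem5:
  fixes sc :: "complex \<Rightarrow> 'w::ring_1" and Om :: "nat \<Rightarrow> 'w set" and d db :: "'w \<Rightarrow> 'w"
    and \<phi> \<Delta> \<Delta>' \<psi> \<theta> \<theta>inv C' M :: 'w
  assumes bdga: "bidifferential_graded_algebra sc Om d db"
    and A: "\<phi> \<in> Om 0" "\<Delta> \<in> Om 0" "\<Delta>' \<in> Om 0" "\<psi> \<in> Om 0" "\<theta> \<in> Om 0"
           "\<theta>inv \<in> Om 0" "C' \<in> Om 0" "M \<in> Om 0"
    and hD: "db \<Delta> = d \<Delta> * \<Delta>"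
    and hD': "db \<Delta>' = d \<Delta>' * \<Delta>'"
    and hpsi: "db \<psi> = d \<phi> * \<psi> + d \<psi> * \<Delta>"
    and inv: "\<theta> * \<theta>inv = 1" "\<theta>inv * \<theta> = 1"
    and htheta: "db \<theta> = d \<phi> * \<theta> + d \<theta> * \<Delta>'"
    and hC: "d C' = 0"
    and hM: "db M = d M * \<Delta>" "\<Delta> * M = M * \<Delta>"
  shows "let \<phi>' = \<phi> + \<theta> * \<Delta>' * \<theta>inv - C';
             \<psi>' = (\<psi> * \<Delta> - \<theta> * \<Delta>' * \<theta>inv * \<psi>) * M
         in db \<psi>' = d \<phi>' * \<psi>' + d \<psi>' * \<Delta>"
proof -
  have GA: "graded_algebra sc Om" and Gd: "graded_derivation sc Om d"
    and Gdb: "graded_derivation sc Om db"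
    using bdga unfolding bidifferential_graded_algebra_def by auto
  have mul0: "x * y \<in> Om 0" if "x \<in> Om 0" "y \<in> Om 0" for x y
    using GA that unfolding graded_algebra_def by (metis add_0)
  have one0: "(1::'w) \<in> Om 0" using GA unfolding graded_algebra_def by metis
  have dadd: "d (x + y) = d x + d y" for x y using Gd unfolding graded_derivation_def by blast
  have dbadd: "db (x + y) = db x + db y" for x y using Gdb unfolding graded_derivation_def by blast
  have ddiff: "d (x - y) = d x - d y" for x y
    using dadd[of "x - y" y] by (simp add: algebra_simps)
  have dbdiff: "db (x - y) = db x - db y" for x y
    using dbadd[of "x - y" y] by (simp add: algebra_simps)
  have dL: "d (a * b) = d a * b + a * d b" if "a \<in> Om 0" for a b
    using Gd that unfolding graded_derivation_def by (metis mult_1 power_0)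
  have dbL: "db (a * b) = db a * b + a * db b" if "a \<in> Om 0" for a b
    using Gdb that unfolding graded_derivation_def by (metis mult_1 power_0)
  have d1: "d 1 = 0" using dL[OF one0, of 1] by simp
  have db1: "db 1 = 0" using dbL[OF one0, of 1] by simp
  have c1: "\<theta>inv * (\<theta> * x) = x" for x by (metis inv(2) mult.assoc mult_1)
  have c2: "\<theta> * (\<theta>inv * x) = x" for x by (metis inv(1) mult.assoc mult_1)
  have "d \<theta> * \<theta>inv + \<theta> * d \<theta>inv = 0" using dL[OF A(5), of \<theta>inv] inv d1 by simp
  hence "\<theta> * d \<theta>inv = - (d \<theta> * \<theta>inv)" by (metis add.commute add_eq_0_iff)
  hence dinv: "d \<theta>inv = - (\<theta>inv * (d \<theta> * \<theta>inv))" by (metis c1 mult_minus_right)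
  have "db \<theta> * \<theta>inv + \<theta> * db \<theta>inv = 0" using dbL[OF A(5), of \<theta>inv] inv db1 by simp
  hence "\<theta> * db \<theta>inv = - (db \<theta> * \<theta>inv)" by (metis add.commute add_eq_0_iff)
  hence dbinv: "db \<theta>inv = - (\<theta>inv * (db \<theta> * \<theta>inv))" by (metis c1 mult_minus_right)
  define T where "T = \<theta> * (\<Delta>' * \<theta>inv)"
  have T0: "T \<in> Om 0" unfolding T_def using A mul0 by blast
  have dT: "d T = d \<theta> * (\<Delta>' * \<theta>inv) + \<theta> * (d \<Delta>' * \<theta>inv + \<Delta>' * d \<theta>inv)"
    unfolding T_def using dL A by simp
  have dbT: "db T = db \<theta> * (\<Delta>' * \<theta>inv) + \<theta> * (db \<Delta>' * \<theta>inv + \<Delta>' * db \<theta>inv)"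
    unfolding T_def using dbL A by simp
  have keyT: "db T = d \<phi> * T + d T * T - T * d \<phi>"
    apply (subst dbT, subst dT)
    unfolding dbinv dinv htheta hD' T_def by (simp add: algebra_simps c1 c2 inv)
  define \<chi> where "\<chi> = \<psi> * \<Delta> - T * \<psi>"
  have d\<chi>: "d \<chi> = d \<psi> * \<Delta> + \<psi> * d \<Delta> - (d T * \<psi> + T * d \<psi>)"
    unfolding \<chi>_def ddiff using dL A T0 by simp
  have db\<chi>: "db \<chi> = db \<psi> * \<Delta> + \<psi> * db \<Delta> - (db T * \<psi> + T * db \<psi>)"
    unfolding \<chi>_def dbdiff using dbL A T0 by simp
  have key\<chi>: "db \<chi> = (d \<phi> + d T) * \<chi> + d \<chi> * \<Delta>"
  proof -
    have "db \<chi> = (d \<phi> * \<psi> + d \<psi> * \<Delta>) * \<Delta> + \<psi> * (d \<Delta> * \<Delta>) -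
     ((d \<phi> * T + d T * T - T * d \<phi>) * \<psi> + T * (d \<phi> * \<psi> + d \<psi> * \<Delta>))"
      by (simp only: db\<chi> keyT hpsi hD)
    also have "\<dots> = (d \<phi> + d T) * (\<psi> * \<Delta> - T * \<psi>) + (d \<psi> * \<Delta> + \<psi> * d \<Delta> - (d T * \<psi> + T * d \<psi>)) * \<Delta>"
      by (simp add: algebra_simps)
    also have "\<dots> = (d \<phi> + d T) * \<chi> + d \<chi> * \<Delta>"
      unfolding d\<chi> by (simp only: \<chi>_def)
    finally show ?thesis .
  qed
  have dPM: "d (\<chi> * M) = d \<chi> * M + \<chi> * d M"
  proof -
    have a: "\<psi> * \<Delta> \<in> Om 0" "T * \<psi> \<in> Om 0" using mul0 A T0 by auto
    show ?thesis unfolding \<chi>_def left_diff_distrib ddiff dL[OF a(1)] dL[OF a(2)]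
      by (simp add: algebra_simps)
  qed
  have dbPM: "db (\<chi> * M) = db \<chi> * M + \<chi> * db M"
  proof -
    have a: "\<psi> * \<Delta> \<in> Om 0" "T * \<psi> \<in> Om 0" using mul0 A T0 by auto
    show ?thesis unfolding \<chi>_def left_diff_distrib dbdiff dbL[OF a(1)] dbL[OF a(2)]
      by (simp add: algebra_simps)
  qed
  have dphi': "d (\<phi> + T - C') = d \<phi> + d T" using ddiff dadd hC by simp
  have "db (\<chi> * M) = d (\<phi> + T - C') * (\<chi> * M) + d (\<chi> * M) * \<Delta>"
    unfolding dbPM dPM dphi' key\<chi> hM(1)
    by (simp add: algebra_simps hM(2))
  moreover have "\<theta> * \<Delta>' * \<theta>inv = T" unfolding T_def by (simp add: mult.assoc)
  ultimately show ?thesis unfolding \<chi>_def Let_def by (simp add: mult.assoc)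
qed

end
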